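(* Let $G$ be a finite abelian group and let $f$ be an automorphism of $\mathcal{P}_{0}(G)$ with pullback $g$. If $H$ is a subgroup of $G$, then $f(H)=g[H]=\{g(h):h\in H\}$.
   Context: For an additively written finite abelian group $G$, $\mathcal{P}_{0}(G)$ is the monoid of all subsets of $G$ containing $0$, with setwise addition and identity $\{0\}$. Every automorphism $f$ of $\mathcal{P}_0(G)$ maps $2$-element sets to $2$-element sets; the pullback of $f$ is the bijection $g:G\to G$ defined by $g(0)=0$ and, for nonzero $a\in G$, by $f(\{0,a\})=\{0,g(a)\}$. *)

theory Defs
  imports Main
begin

definition P0 :: "'a::ab_group_add set set" where
  "P0 = {A. 0 \<in> A}"

definition set_add :: "'a::ab_group_add set \<Rightarrow> 'a set \<Rightarrow> 'a set" where
  "set_add A B = {a + b | a b. a \<in> A \<and> b \<in> B}"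

text \<open>Monoid automorphism of P_0(G) (only its values on P_0(G) matter).\<close>

definition P0_automorphism :: "('a::ab_group_add set \<Rightarrow> 'a set) \<Rightarrow> bool" where
  "P0_automorphism f \<longleftrightarrow>
     bij_betw f P0 P0 \<and>
     (\<forall>A\<in>P0. \<forall>B\<in>P0. f (set_add A B) = set_add (f A) (f B)) \<and>
     f {0} = {0}"

definition pullback :: "('a::ab_group_add set \<Rightarrow> 'a set) \<Rightarrow> 'a \<Rightarrow> 'a" where
  "pullback f a = (if a = 0 then 0 else (THE b. f {0, a} = {0, b}))"

definition add_subgroup :: "'a::ab_group_add set \<Rightarrow> bool" where
  "add_subgroup H \<longleftrightarrow> 0 \<in> H \<and> (\<forall>x\<in>H. \<forall>y\<in>H. x + y \<in> H) \<and> (\<forall>x\<in>H. - x \<in> H)"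

end

theory Submission
  imports Defs
begin

definition FF :: "'a::ab_group_add set \<Rightarrow> 'a set set" where
  "FF X = {Z \<in> P0. set_add X Z = UNIV}"

definition chr :: "'a::ab_group_add set \<Rightarrow> bool" where
  "chr X \<longleftrightarrow> X \<noteq> {0} \<and> (\<forall>Y\<in>P0. FF Y \<subseteq> FF X \<longrightarrow> Y = {0} \<or> FF X \<subseteq> FF Y)"

definition two :: "'a::ab_group_add set \<Rightarrow> bool" where
  "two X \<longleftrightarrow> (\<exists>a. a \<noteq> 0 \<and> X = {0, a})"

lemma set_add_P0: "A \<in> P0 \<Longrightarrow> B \<in> P0 \<Longrightarrow> set_add A B \<in> P0"
  unfolding P0_def set_add_def by force

lemma set_add_mono: "A \<subseteq> A' \<Longrightarrow> set_add A Z \<subseteq> set_add A' Z"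
  unfolding set_add_def by blast

lemma set_add_UNIV: "Z \<in> P0 \<Longrightarrow> set_add UNIV Z = UNIV"
  unfolding set_add_def P0_def by force

lemma two_chr:
  fixes X :: "'a::{ab_group_add,finite} set"
  assumes "X \<in> P0" "two X" shows "chr X"
proof -
  obtain a where a: "a \<noteq> 0" "X = {0,a}" using assms(2) two_def by blast
  have "FF X \<subseteq> FF Y" if Y: "Y \<in> P0" "FF Y \<subseteq> FF X" "Y \<noteq> {0}" for Y
  proof -
    obtain b where b: "b \<in> Y" "b \<noteq> 0" using Y(1,3) unfolding P0_def by blast
    have Y0: "0 \<in> Y" using Y(1) unfolding P0_def by simp
    show ?thesis
    proof (cases "X = UNIV")
      case True
      then have "Y \<subseteq> X" by simp
      with a b Y0 have "Y = X" by auto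
      then show ?thesis by simp
    next
      case False
      then obtain g where g: "g \<notin> X" by blast
      define Z where "Z = {z. g - z \<notin> X}"
      have Z0: "Z \<in> P0" using g unfolding Z_def P0_def by simp
      have "set_add X Z \<noteq> UNIV"
      proof
        assume "set_add X Z = UNIV"
        then have "g \<in> set_add X Z" by simp
        then obtain x z where "x \<in> X" "z \<in> Z" "g = x + z" unfolding set_add_def by blast
        then show False unfolding Z_def by (simp add: algebra_simps)
      qed
      then have "Z \<notin> FF Y" using Y(2) Z0 unfolding FF_def by blast
      then have "set_add Y Z \<noteq> UNIV" using Z0 unfolding FF_def by blast
      then obtain h where h: "h \<notin> set_add Y Z" by blast
      have ht: "y + (g - h) \<in> X" if "y \<in> Y" for y
      proof (rule ccontr)
        assume "y + (g - h) \<notin> X"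
        then have "h - y \<in> Z" unfolding Z_def by (simp add: algebra_simps)
        then have "y + (h - y) \<in> set_add Y Z" using that unfolding set_add_def by blast
        then show False using h by simp
      qed
      define t where "t = g - h"
      have t1: "t \<in> X" using ht[OF Y0] t_def by simp
      have t2: "b + t \<in> X" using ht[OF b(1)] t_def by simp
      have Xt: "X = {t, b + t}" using t1 t2 a b(2) by auto
      show ?thesis
      proof
        fix Z' assume "Z' \<in> FF X"
        then have Z': "Z' \<in> P0" "set_add X Z' = UNIV" unfolding FF_def by auto
        have "w \<in> set_add Y Z'" for w
        proof -
          have "w + t \<in> set_add X Z'" using Z'(2) by simp
          then obtain x z where xz: "x \<in> X" "z \<in> Z'" "w + t = x + z" unfolding set_add_def by blast
          have "x - t \<in> Y" using xz(1) Xt Y0 b(1) by auto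
          moreover have "w = (x - t) + z" using xz(3) by (simp add: algebra_simps)
          ultimately show ?thesis using xz(2) unfolding set_add_def by blast
        qed
        then show "Z' \<in> FF Y" using Z' unfolding FF_def by blast
      qed
    qed
  qed
  moreover have "X \<noteq> {0}" using a by auto
  ultimately show ?thesis unfolding chr_def by blast
qed

lemma chr_two:
  fixes X :: "'a::{ab_group_add,finite} set"
  assumes "X \<in> P0" "chr X" shows "two X"
proof (rule ccontr)
  assume nt: "\<not> two X"
  have X0: "0 \<in> X" using assms(1) unfolding P0_def by simp
  have Xn: "X \<noteq> {0}" using assms(2) chr_def by blast
  then obtain a where a: "a \<in> X" "a \<noteq> 0" using X0 by blast
  have "X \<noteq> {0,a}" using nt a two_def by blast
  then obtain c where c: "c \<in> X" "c \<noteq> 0" "c \<noteq> a" using X0 a by blast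
  define Y where "Y = {0,a}"
  have YP: "Y \<in> P0" unfolding Y_def P0_def by simp
  have "FF Y \<subseteq> FF X"
    using set_add_mono[of Y X] X0 a unfolding FF_def Y_def by blast
  moreover have "Y \<noteq> {0}" using a Y_def by auto
  moreover have "\<not> FF X \<subseteq> FF Y"
  proof (cases "X = UNIV")
    case True
    have "{0} \<in> FF X" using True unfolding FF_def P0_def set_add_def by auto
    moreover have "{0} \<notin> FF Y"
    proof
      assume "{0} \<in> FF Y"
      then have "c \<in> set_add Y {0}" unfolding FF_def by auto
      then show False using c unfolding Y_def set_add_def by auto
    qed
    ultimately show ?thesis by blast
  next
    case False
    then obtain g where g: "g \<notin> X" by blast
    define Z where "Z = - {g, g - a}"
    have ZP: "Z \<in> P0" unfolding Z_def P0_def using g X0 a(1) by auto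
    have "h \<in> set_add X Z" for h
    proof -
      have "\<exists>x\<in>{0,a,c}. h - x \<notin> {g, g - a}"
        using a c by (auto simp: algebra_simps) (metis add_diff_cancel_left' diff_add_cancel eq_iff_diff_eq_0)
      then obtain x where x: "x \<in> X" "h - x \<in> Z" using X0 a c unfolding Z_def by blast
      then have "x + (h - x) \<in> set_add X Z" unfolding set_add_def by blast
      then show ?thesis by simp
    qed
    then have "Z \<in> FF X" using ZP unfolding FF_def by blast
    moreover have "g \<notin> set_add Y Z"
      unfolding set_add_def Y_def Z_def by (auto simp: algebra_simps)
    then have "Z \<notin> FF Y" unfolding FF_def by auto
    ultimately show ?thesis by blast
  qed
  ultimately show False using assms(2) YP unfolding chr_def by blast
qed


context
  fixes f :: "'a::{ab_group_add,finite} set \<Rightarrow> 'a set"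
  assumes aut: "P0_automorphism f"
begin

lemma bij: "bij_betw f P0 P0" using aut unfolding P0_automorphism_def by blast
lemma hom: "A \<in> P0 \<Longrightarrow> B \<in> P0 \<Longrightarrow> f (set_add A B) = set_add (f A) (f B)"
  using aut unfolding P0_automorphism_def by blast
lemma f0: "f {0} = {0}" using aut unfolding P0_automorphism_def by blast
lemma fP0: "A \<in> P0 \<Longrightarrow> f A \<in> P0" using bij unfolding bij_betw_def by blast
lemma injf: "inj_on f P0" using bij by (simp add: bij_betw_def)
lemma imf: "f ` P0 = P0" using bij by (simp add: bij_betw_def)
lemma finj: "A \<in> P0 \<Longrightarrow> B \<in> P0 \<Longrightarrow> f A = f B \<Longrightarrow> A = B"
  by (rule inj_onD[OF injf])
lemma fsurj: assumes "B \<in> P0" shows "\<exists>A\<in>P0. f A = B"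
proof -
  have "B \<in> f ` P0" using imf assms by simp
  then show ?thesis by (auto simp del: imf)
qed

lemma UNIV_P0: "UNIV \<in> P0" unfolding P0_def by simp

lemma fUNIV: "f UNIV = UNIV"
proof -
  obtain Z where Z: "Z \<in> P0" "f Z = UNIV" using fsurj UNIV_P0 by blast
  have "f UNIV = f (set_add UNIV Z)" using set_add_UNIV[OF Z(1)] by simp
  also have "\<dots> = set_add (f UNIV) UNIV" using hom[OF UNIV_P0 Z(1)] Z(2) by simp
  also have "\<dots> = UNIV"
  proof -
    have "0 \<in> f UNIV" using fP0[OF UNIV_P0] unfolding P0_def by simp
    then have "0 + w \<in> set_add (f UNIV) UNIV" for w unfolding set_add_def by blast
    then show ?thesis by auto
  qed
  finally show ?thesis .
qed

lemma FF_iff: assumes "X \<in> P0" "Z \<in> P0" shows "Z \<in> FF X \<longleftrightarrow> f Z \<in> FF (f X)"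
proof -
  have "f (set_add X Z) = set_add (f X) (f Z)" using hom[OF assms] .
  moreover have "set_add X Z = UNIV \<longleftrightarrow> f (set_add X Z) = UNIV"
    using finj[OF set_add_P0[OF assms] UNIV_P0] fUNIV by auto
  ultimately show ?thesis unfolding FF_def using assms fP0[OF assms(2)] by auto
qed

lemma FF_sub: assumes "X \<in> P0" "Y \<in> P0"
  shows "FF Y \<subseteq> FF X \<longleftrightarrow> FF (f Y) \<subseteq> FF (f X)"
proof
  assume h: "FF Y \<subseteq> FF X"
  show "FF (f Y) \<subseteq> FF (f X)"
  proof
    fix Z' assume Z': "Z' \<in> FF (f Y)"
    then have "Z' \<in> P0" unfolding FF_def by auto
    then obtain Z where Z: "Z \<in> P0" "f Z = Z'" using fsurj by blast
    then show "Z' \<in> FF (f X)" using Z' h FF_iff assms by blast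
  qed
next
  assume h: "FF (f Y) \<subseteq> FF (f X)"
  show "FF Y \<subseteq> FF X"
  proof
    fix Z assume Z: "Z \<in> FF Y"
    then have "Z \<in> P0" unfolding FF_def by auto
    then show "Z \<in> FF X" using Z h FF_iff assms by blast
  qed
qed

lemma chr_f: assumes "X \<in> P0" shows "chr X \<longleftrightarrow> chr (f X)"
proof -
  have e0: "Y \<in> P0 \<Longrightarrow> Y = {0} \<longleftrightarrow> f Y = {0}" for Y
    using f0 finj[of Y "{0}"] unfolding P0_def by auto
  have "(\<forall>Y\<in>P0. FF Y \<subseteq> FF X \<longrightarrow> Y = {0} \<or> FF X \<subseteq> FF Y) \<longleftrightarrow>
        (\<forall>Y\<in>P0. FF (f Y) \<subseteq> FF (f X) \<longrightarrow> f Y = {0} \<or> FF (f X) \<subseteq> FF (f Y))"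
    using FF_sub e0 assms by auto
  also have "\<dots> \<longleftrightarrow> (\<forall>Y\<in>P0. FF Y \<subseteq> FF (f X) \<longrightarrow> Y = {0} \<or> FF (f X) \<subseteq> FF Y)"
  proof
    assume L: "\<forall>Y\<in>P0. FF (f Y) \<subseteq> FF (f X) \<longrightarrow> f Y = {0} \<or> FF (f X) \<subseteq> FF (f Y)"
    show "\<forall>Y\<in>P0. FF Y \<subseteq> FF (f X) \<longrightarrow> Y = {0} \<or> FF (f X) \<subseteq> FF Y"
    proof (intro ballI)
      fix Y :: "'a set" assume "Y \<in> P0"
      then obtain W where "W \<in> P0" "f W = Y" using fsurj by blast
      then show "FF Y \<subseteq> FF (f X) \<longrightarrow> Y = {0} \<or> FF (f X) \<subseteq> FF Y" using L by blast
    qed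
  next
    assume R: "\<forall>Y\<in>P0. FF Y \<subseteq> FF (f X) \<longrightarrow> Y = {0} \<or> FF (f X) \<subseteq> FF Y"
    show "\<forall>Y\<in>P0. FF (f Y) \<subseteq> FF (f X) \<longrightarrow> f Y = {0} \<or> FF (f X) \<subseteq> FF (f Y)"
      using R fP0 by blast
  qed
  finally have c: "(\<forall>Y\<in>P0. FF Y \<subseteq> FF X \<longrightarrow> Y = {0} \<or> FF X \<subseteq> FF Y) \<longleftrightarrow>
    (\<forall>Y\<in>P0. FF Y \<subseteq> FF (f X) \<longrightarrow> Y = {0} \<or> FF (f X) \<subseteq> FF Y)" .
  have d: "X = {0} \<longleftrightarrow> f X = {0}" using e0[OF assms] .
  show ?thesis unfolding chr_def using c d by argo
qed

lemma two_f: assumes "X \<in> P0" shows "two X \<longleftrightarrow> two (f X)"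
proof -
  have fx: "f X \<in> P0" using fP0 assms by blast
  have "two X \<longleftrightarrow> chr X" using two_chr[OF assms] chr_two[OF assms] by argo
  also have "\<dots> \<longleftrightarrow> chr (f X)" by (rule chr_f[OF assms])
  also have "\<dots> \<longleftrightarrow> two (f X)" using two_chr[OF fx] chr_two[OF fx] by argo
  finally show ?thesis .
qed

lemma pb: assumes "h \<noteq> 0" "f {0,h} = {0,b}" "b \<noteq> 0" shows "pullback f h = b"
proof -
  have u: "x = b" if "{0,x} = {0,b}" for x :: 'a
  proof -
    have "b \<in> {0,x}" using that by simp
    then show ?thesis using assms(3) by simp
  qed
  have "(THE x. f {0, h} = {0, x}) = b"
  proof (rule the_equality)
    show "f {0, h} = {0, b}" by (rule assms(2))
    fix x assume "f {0, h} = {0, x}"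
    then show "x = b" using u assms(2) by simp
  qed
  then show ?thesis using assms(1) unfolding pullback_def by simp
qed

end

theorem lemma2p4:
  fixes f :: "'a::{ab_group_add, finite} set \<Rightarrow> 'a set"
    and H :: "'a set"
  assumes "P0_automorphism f"
    and "add_subgroup H"
  shows "f H = pullback f ` H"
proof -
  note aut = assms(1)
  have HP: "H \<in> P0" using assms(2) unfolding add_subgroup_def P0_def by simp
  have HH: "set_add H H = H" using assms(2) unfolding add_subgroup_def set_add_def
    by auto (metis add_0)
  have fH: "set_add (f H) (f H) = f H" using hom[OF aut HP HP] HH by simp
  have fHP: "f H \<in> P0" using fP0[OF aut HP] .
  have D: "{0,c} \<in> P0" for c :: 'a unfolding P0_def by simp
  show ?thesis
  proof
    show "pullback f ` H \<subseteq> f H"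
    proof
      fix y assume "y \<in> pullback f ` H"
      then obtain h where h: "h \<in> H" "y = pullback f h" by blast
      show "y \<in> f H"
      proof (cases "h = 0")
        case True then show ?thesis using h fHP unfolding pullback_def P0_def by simp
      next
        case False
        have "two (f {0,h})" using two_f[OF aut D] False two_def by blast
        then obtain b where b: "b \<noteq> 0" "f {0,h} = {0,b}" unfolding two_def by blast
        have "y = b" using pb[OF aut False b(2) b(1)] h by simp
        have "set_add {0,h} H = H" using h HH HP unfolding set_add_def P0_def
          by auto (metis add_0)
        moreover have "f (set_add {0,h} H) = set_add {0,b} (f H)" using hom[OF aut D[of h] HP] b(2) by simp
        ultimately have "set_add {0,b} (f H) = f H" by simp
        moreover have "b + 0 \<in> set_add {0,b} (f H)" using fHP unfolding set_add_def P0_def by blast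
        ultimately show ?thesis using \<open>y = b\<close> by simp
      qed
    qed
  next
    show "f H \<subseteq> pullback f ` H"
    proof
      fix b assume b: "b \<in> f H"
      show "b \<in> pullback f ` H"
      proof (cases "b = 0")
        case True
        then show ?thesis using HP unfolding pullback_def P0_def by force
      next
        case False
        obtain X where X: "X \<in> P0" "f X = {0,b}" using fsurj[OF aut D] by blast
        have "two X" using two_f[OF aut X(1)] X(2) False two_def by blast
        then obtain c where c: "c \<noteq> 0" "X = {0,c}" unfolding two_def by blast
        have "set_add {0,b} (f H) \<subseteq> set_add (f H) (f H)"
          using set_add_mono[of "{0,b}" "f H"] b fHP unfolding P0_def by blast
        moreover have "f H \<subseteq> set_add {0,b} (f H)" unfolding set_add_def by force
        ultimately have "set_add {0,b} (f H) = f H" using fH by blast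
        then have "f (set_add X H) = f H" using hom[OF aut X(1) HP] X by simp
        then have "set_add X H = H" using finj[OF aut set_add_P0[OF X(1) HP] HP] by simp
        then have "c + 0 \<in> H" using c HP unfolding set_add_def P0_def by blast
        moreover have "pullback f c = b" using pb[OF aut c(1)] X c False by simp
        ultimately show ?thesis by force
      qed
    qed
  qed
qed

end
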